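(* Suppose the cost norm is $\|\cdot\|=\|\cdot\|_2$, and the Margin-without-intercept assumption and Boundedness hold. For agents $A_0,\dots,A_T\in\mathcal{A}$, let $(y_t,b_t)$ be generated by the projected strategic perceptron with $\mathbb{L}=\mathbb{R}^d\times\{0\}$ and $\gamma=1$ (so $b_t=0$ for all $t$). Then $$\sum_{t\in\mathcal{M}_T}L_{\mathrm{hinge}}\Big(\big(\tfrac{y_*}{d_*\|y_*\|_2},0\big);(s(A_t,y_t,0),1),\ell(A_t)\Big)\le0,$$ and consequently $|\mathcal{M}_T|\le\frac{(D+2/c)^2+1}{d_*^2}$.
   Context: Setting: $\mathcal{A}\subseteq\mathbb{R}^d$, labels $\ell(A)\in\{\pm1\}$; $\operatorname{sign}(0)=+1$; cost constant $c>0$; norm $\|\cdot\|_2$, $v(y)=y/\|y\|_2$ for $y\ne0$, $v(0)=0$. Predicted label $\hat\ell(x,y,b)=\operatorname{sign}(y^\top x+b-2\|y\|_2/c)$. Response: for $y\ne0$, $r(A,y,b)=A+(\tfrac2c-\tfrac{y^\top A+b}{\|y\|_2})v(y)$ if $0\le\tfrac{y^\top A+b}{\|y\|_2}<\tfrac2c$, else $A$. Proxy: for $y\ne0$, $s(A,y,b)=A-\tfrac{y^\top A+b}{\|y\|_2}v(y)$ if $0\le\tfrac{y^\top A+b}{\|y\|_2}<\tfrac2c$ and $\ell(A)=-1$; $=A+(\tfrac2c-\tfrac{y^\top A+b}{\|y\|_2})v(y)$ if the range condition holds and $\ell(A)=+1$; $=A$ otherwise; $r(A,0,b)=s(A,0,b)=A$.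 Margin-without-intercept assumption: $d_*:=\max_{y\ne0}\min_{A\in\mathcal{A}}\ell(A)\frac{y^\top A}{\|y\|_2}$ is attained at some $y_*\ne0$ and $d_*>0$. Boundedness: $D:=\sup_{A\in\mathcal{A}}\|A\|_2<\infty$. Hinge loss $L_{\mathrm{hinge}}(q;\xi,\ell)=\max\{0,1-\ell q^\top\xi\}$. Projected strategic perceptron with closed convex cone $\mathbb{L}$ and stepsize $\gamma$: $q_0=(y_0,b_0)=(0,0)$; for $t=0,\dots,T$: agent $A_t$ is shown $(y_t,b_t)$, responds $r(A_t,y_t,b_t)$, is predicted $\hat\ell(r(A_t,y_t,b_t),y_t,b_t)$; with $\xi_t=(s(A_t,y_t,b_t),1)$, $z_{t+1}=q_t+\gamma\ell(A_t)\xi_t$ on a mistake, else $z_{t+1}=q_t$; $q_{t+1}=(y_{t+1},b_{t+1})=\Pi_{\mathbb{L}}(z_{t+1})$. Mistake set $\mathcal{M}_T=\{t\in\{0,\dots,T\}:\hat\ell(r(A_t,y_t,b_t),y_t,b_t)\ne\ell(A_t)\}$. *)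

theory Defs
  imports "HOL-Analysis.Analysis"
begin

definition sgn0 :: "real \<Rightarrow> real" where
  "sgn0 x = (if x \<ge> 0 then 1 else -1)"

definition vdir :: "'a::euclidean_space \<Rightarrow> 'a" where
  "vdir y = (if y = 0 then 0 else y /\<^sub>R norm y)"

definition pred_label :: "real \<Rightarrow> 'a::euclidean_space \<Rightarrow> 'a \<Rightarrow> real \<Rightarrow> real" where
  "pred_label c x y b = sgn0 (y \<bullet> x + b - 2 * norm y / c)"

definition resp :: "real \<Rightarrow> 'a::euclidean_space \<Rightarrow> 'a \<Rightarrow> real \<Rightarrow> 'a" where
  "resp c A y b =
     (if y \<noteq> 0 \<and> 0 \<le> (y \<bullet> A + b) / norm y \<and> (y \<bullet> A + b) / norm y < 2 / c
      then A + (2 / c - (y \<bullet> A + b) / norm y) *\<^sub>R vdir y else A)"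

definition proxy :: "real \<Rightarrow> ('a::euclidean_space \<Rightarrow> real) \<Rightarrow> 'a \<Rightarrow> 'a \<Rightarrow> real \<Rightarrow> 'a" where
  "proxy c lab A y b =
     (if y \<noteq> 0 \<and> 0 \<le> (y \<bullet> A + b) / norm y \<and> (y \<bullet> A + b) / norm y < 2 / c
      then (if lab A = -1 then A - ((y \<bullet> A + b) / norm y) *\<^sub>R vdir y
            else if lab A = 1 then A + (2 / c - (y \<bullet> A + b) / norm y) *\<^sub>R vdir y
            else A)
      else A)"

definition hinge :: "('a::euclidean_space \<times> real) \<Rightarrow> ('a \<times> real) \<Rightarrow> real \<Rightarrow> real" where
  "hinge q \<xi> l = max 0 (1 - l * (q \<bullet> \<xi>))"

definition proj_set :: "('b::euclidean_space) set \<Rightarrow> 'b \<Rightarrow> 'b" where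
  "proj_set L z = (SOME p. p \<in> L \<and> (\<forall>w\<in>L. dist z p \<le> dist z w))"

definition is_mistake :: "real \<Rightarrow> ('a::euclidean_space \<Rightarrow> real) \<Rightarrow> 'a \<Rightarrow> 'a \<times> real \<Rightarrow> bool" where
  "is_mistake c lab A q =
     (pred_label c (resp c A (fst q) (snd q)) (fst q) (snd q) \<noteq> lab A)"

primrec perceptron ::
  "real \<Rightarrow> ('a::euclidean_space \<Rightarrow> real) \<Rightarrow> ('a \<times> real) set \<Rightarrow> real \<Rightarrow> (nat \<Rightarrow> 'a) \<Rightarrow> nat \<Rightarrow> 'a \<times> real"
where
  "perceptron c lab L \<gamma> A 0 = (0, 0)"
| "perceptron c lab L \<gamma> A (Suc t) =
     (let q = perceptron c lab L \<gamma> A t;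
          z = (if is_mistake c lab (A t) q
               then q + (\<gamma> * lab (A t)) *\<^sub>R (proxy c lab (A t) (fst q) (snd q), 1)
               else q)
      in proj_set L z)"

definition mistakes ::
  "real \<Rightarrow> ('a::euclidean_space \<Rightarrow> real) \<Rightarrow> ('a \<times> real) set \<Rightarrow> real \<Rightarrow> (nat \<Rightarrow> 'a) \<Rightarrow> nat \<Rightarrow> nat set"
where
  "mistakes c lab L \<gamma> A T = {t \<in> {0..T}. is_mistake c lab (A t) (perceptron c lab L \<gamma> A t)}"

definition margin_dir :: "'a::euclidean_space set \<Rightarrow> ('a \<Rightarrow> real) \<Rightarrow> 'a \<Rightarrow> real" where
  "margin_dir Ag lab y = (INF A\<in>Ag. lab A * (y \<bullet> A) / norm y)"

end

theory Submission imports Defs begin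

lemma proj_L: "proj_set {(y::'a::euclidean_space, b::real). b = 0} z = (fst z, 0)"
proof -
  let ?L = "{(y::'a, b::real). b = 0}"
  have d: "dist z p = sqrt ((dist (fst z) (fst p))\<^sup>2 + (dist (snd z) (snd p))\<^sup>2)" for p
    by (metis dist_Pair_Pair prod.collapse)
  show ?thesis unfolding proj_set_def
  proof (rule someI2[where a="(fst z, 0)"])
    show "(fst z, 0) \<in> ?L \<and> (\<forall>w\<in>?L. dist z (fst z, 0) \<le> dist z w)"
      by (auto simp: d)
  next
    fix p assume p: "p \<in> ?L \<and> (\<forall>w\<in>?L. dist z p \<le> dist z w)"
    then have s: "snd p = 0" by auto
    have "dist z p \<le> dist z (fst z, 0)" using p by auto
    then have "sqrt ((dist (fst z) (fst p))\<^sup>2 + (snd z)\<^sup>2) \<le> sqrt ((snd z)\<^sup>2)"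
      by (simp add: d s dist_real_def)
    then have "(dist (fst z) (fst p))\<^sup>2 + (snd z)\<^sup>2 \<le> (snd z)\<^sup>2"
      using real_sqrt_le_iff by blast
    then have "(dist (fst z) (fst p))\<^sup>2 \<le> 0" by simp
    then have "fst p = fst z" by simp
    then show "p = (fst z, 0)" using s by (metis prod.collapse)
  qed
qed

lemma mistake_step:
  fixes A y :: "'a::euclidean_space"
  assumes c: "c > 0" and l: "lab A = 1 \<or> lab A = -1"
    and m: "is_mistake c lab A (y, 0)"
  shows "lab A * (y \<bullet> proxy c lab A y 0) \<le> 0"
proof (cases "y = 0")
  case True then show ?thesis by (simp add: proxy_def)
next
  case nz: False
  define \<alpha> where "\<alpha> = (y \<bullet> A) / norm y"
  have ny: "norm y > 0" using nz by simp
  have yv: "y \<bullet> vdir y = norm y" using nz by (simp add: vdir_def power2_norm_eq_inner[symmetric] power2_eq_square)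
  have yA: "y \<bullet> A = \<alpha> * norm y" using ny by (simp add: \<alpha>_def)
  show ?thesis
  proof (cases "0 \<le> \<alpha> \<and> \<alpha> < 2 / c")
    case True
    have r: "resp c A y 0 = A + (2 / c - \<alpha>) *\<^sub>R vdir y" using True nz by (simp add: resp_def \<alpha>_def)
    have "pred_label c (resp c A y 0) y 0 = 1"
      by (simp add: pred_label_def r inner_add_right yv yA sgn0_def algebra_simps)
    then have "lab A = -1" using m l by (auto simp: is_mistake_def)
    then have "proxy c lab A y 0 = A - \<alpha> *\<^sub>R vdir y" using True nz by (simp add: proxy_def \<alpha>_def)
    then show ?thesis by (simp add: inner_diff_right yv yA)
  next
    case False
    have r: "resp c A y 0 = A" using False by (auto simp: resp_def \<alpha>_def)
    have p: "proxy c lab A y 0 = A" using False by (auto simp: proxy_def \<alpha>_def)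
    show ?thesis
    proof (cases "\<alpha> < 0")
      case True
      have "\<alpha> * norm y < 0" using True ny by (simp add: mult_neg_pos)
      moreover have "2 * norm y / c > 0" using ny c by simp
      ultimately have "y \<bullet> A - 2 * norm y / c < 0" using yA by linarith
      then have "pred_label c (resp c A y 0) y 0 = -1" by (simp add: pred_label_def r sgn0_def)
      then have "lab A = 1" using m l by (auto simp: is_mistake_def)
      then show ?thesis using p yA True ny by (simp add: mult_nonpos_nonneg)
    next
      case f2: False
      then have "\<alpha> \<ge> 2 / c" using False by auto
      then have "(2 / c) * norm y \<le> \<alpha> * norm y" using ny mult_right_mono[of "2/c" \<alpha> "norm y"] by linarith
      then have "y \<bullet> A - 2 * norm y / c \<ge> 0" using yA by simp
      then have "pred_label c (resp c A y 0) y 0 = 1" by (simp add: pred_label_def r sgn0_def)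
      then have "lab A = -1" using m l by (auto simp: is_mistake_def)
      then show ?thesis using p yA f2 ny by simp
    qed
  qed
qed

lemma proxy_norm:
  fixes A y :: "'a::euclidean_space"
  assumes c: "c > 0"
  shows "norm (proxy c lab A y 0) \<le> norm A + 2 / c"
proof -
  have nv: "norm (vdir y) \<le> 1" by (simp add: vdir_def)
  have "norm (k *\<^sub>R vdir y) \<le> \<bar>k\<bar>" for k
    using nv by (simp add: mult_left_le)
  then have a: "norm (A + k *\<^sub>R vdir y) \<le> norm A + \<bar>k\<bar>" "norm (A - k *\<^sub>R vdir y) \<le> norm A + \<bar>k\<bar>" for k
    by (meson add_left_mono norm_triangle_ineq order_trans norm_triangle_ineq4)+
  show ?thesis using c unfolding proxy_def
    apply (auto intro!: order_trans[OF a(1)] order_trans[OF a(2)])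
    done
qed

lemma proxy_margin:
  fixes A y ys :: "'a::euclidean_space"
  assumes c: "c > 0" and l: "lab A = 1 \<or> lab A = -1" and yy: "ys \<bullet> y \<ge> 0"
  shows "lab A * (ys \<bullet> proxy c lab A y 0) \<ge> lab A * (ys \<bullet> A)"
proof -
  have yv: "ys \<bullet> vdir y \<ge> 0" using yy by (simp add: vdir_def)
  have k: "0 \<le> y \<bullet> A * (ys \<bullet> vdir y) / norm y" if "0 \<le> y \<bullet> A / norm y"
    using mult_nonneg_nonneg[OF that yv] by simp
  show ?thesis using l c yv k unfolding proxy_def
    by (auto simp: inner_add_right inner_diff_right mult_nonneg_nonneg)
qed
theorem mainTheorem17:
  fixes Ag :: "'a::euclidean_space set"
    and lab :: "'a \<Rightarrow> real"
    and c dstar D :: real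
    and ystar :: 'a
    and A :: "nat \<Rightarrow> 'a"
    and T :: nat
  assumes labels: "\<forall>X\<in>Ag. lab X = 1 \<or> lab X = -1"
    and c_pos: "c > 0"
    and ystar_nz: "ystar \<noteq> 0"
    and dstar_def: "dstar = margin_dir Ag lab ystar"
    and ystar_max: "\<forall>y. y \<noteq> 0 \<longrightarrow> margin_dir Ag lab y \<le> margin_dir Ag lab ystar"
    and dstar_pos: "dstar > 0"
    and bnd: "bounded Ag"
    and D_def: "D = (SUP X\<in>Ag. norm X)"
    and agents: "\<forall>t\<le>T. A t \<in> Ag"
  shows "(\<Sum>t\<in>mistakes c lab {(y, b). b = 0} 1 A T.
            hinge (ystar /\<^sub>R (dstar * norm ystar), 0)
                  (proxy c lab (A t) (fst (perceptron c lab {(y, b). b = 0} 1 A t)) 0, 1)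
                  (lab (A t))) \<le> 0
       \<and> real (card (mistakes c lab {(y, b). b = 0} 1 A T)) \<le> ((D + 2 / c)\<^sup>2 + 1) / dstar\<^sup>2"
proof -
  let ?L = "{(y::'a, b::real). b = 0}"
  define P where "P = perceptron c lab ?L 1 A"
  define mis where "mis t = is_mistake c lab (A t) (P t)" for t
  define K where "K = D + 2 / c"
  define m where "m n = card {t\<in>{..<n}. mis t}" for n
  obtain B where B: "\<forall>x\<in>Ag. norm x \<le> B" using bnd bounded_iff by blast
  have normD: "norm X \<le> D" if "X \<in> Ag" for X
    unfolding D_def using that B by (intro cSUP_upper) (auto intro: bdd_aboveI2)
  have nys: "norm ystar > 0" using ystar_nz by simp
  have marg: "dstar * norm ystar \<le> lab X * (ystar \<bullet> X)" if "X \<in> Ag" for X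
  proof -
    have "bdd_below ((\<lambda>A. lab A * (ystar \<bullet> A) / norm ystar) ` Ag)"
    proof (rule bdd_belowI2)
      fix x assume x: "x \<in> Ag"
      have l: "\<bar>lab x\<bar> = 1" using labels x by auto
      have "\<bar>lab x * (ystar \<bullet> x) / norm ystar\<bar> = \<bar>ystar \<bullet> x\<bar> / norm ystar" using l
        by (simp add: abs_mult)
      also have "\<dots> \<le> norm ystar * norm x / norm ystar"
        using divide_right_mono[OF Cauchy_Schwarz_ineq2[of ystar x], of "norm ystar"] nys by linarith
      also have "\<dots> \<le> B" using B x nys by simp
      finally show "- B \<le> lab x * (ystar \<bullet> x) / norm ystar" by linarith
    qed
    then have "dstar \<le> lab X * (ystar \<bullet> X) / norm ystar"
      unfolding dstar_def margin_dir_def using that by (rule cINF_lower)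
    then show ?thesis using nys by (simp add: pos_le_divide_eq)
  qed
  have PS: "P (Suc t) = (if mis t then (fst (P t) + lab (A t) *\<^sub>R proxy c lab (A t) (fst (P t)) (snd (P t)), 0)
                         else (fst (P t), 0))" for t
    by (simp add: P_def mis_def Let_def proj_L)
  have inv: "n \<le> Suc T \<Longrightarrow> snd (P n) = 0 \<and> real (m n) * (dstar * norm ystar) \<le> ystar \<bullet> fst (P n)
             \<and> (norm (fst (P n)))\<^sup>2 \<le> real (m n) * K\<^sup>2" for n
  proof (induction n)
    case 0
    then show ?case by (simp add: P_def m_def)
  next
    case (Suc n)
    then have IH: "snd (P n) = 0" "real (m n) * (dstar * norm ystar) \<le> ystar \<bullet> fst (P n)"
        "(norm (fst (P n)))\<^sup>2 \<le> real (m n) * K\<^sup>2" by auto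
    have An: "A n \<in> Ag" using agents Suc.prems by auto
    have set: "{t\<in>{..<Suc n}. mis t} = (if mis n then insert n {t\<in>{..<n}. mis t} else {t\<in>{..<n}. mis t})"
      by (auto simp: less_Suc_eq)
    show ?case
    proof (cases "mis n")
      case False
      have "m (Suc n) = m n" unfolding m_def set using False by simp
      then show ?thesis using IH False by (simp add: PS)
    next
      case True
      define y where "y = fst (P n)"
      define s where "s = proxy c lab (A n) y 0"
      define l where "l = lab (A n)"
      have Pn: "P n = (y, 0)" using IH(1) by (simp add: y_def prod_eq_iff)
      have mSuc: "m (Suc n) = Suc (m n)" unfolding m_def set using True by simp
      have PSn: "P (Suc n) = (y + l *\<^sub>R s, 0)" using True by (simp add: PS Pn s_def l_def)
      have lab: "l = 1 \<or> l = -1" using labels An l_def by auto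
      have l2: "l * l = 1" using lab by auto
      have ys0: "ystar \<bullet> y \<ge> 0" using IH(2) dstar_pos nys y_def
        by (smt (verit) mult_nonneg_nonneg of_nat_0_le_iff)
      have pm: "l * (ystar \<bullet> s) \<ge> dstar * norm ystar"
        using proxy_margin[OF c_pos, of lab "A n" ystar y] lab ys0 marg[OF An]
        by (simp add: s_def l_def)
      have mi: "is_mistake c lab (A n) (y, 0)" using True Pn by (simp add: mis_def)
      have neg: "l * (y \<bullet> s) \<le> 0" using mistake_step[OF c_pos _ mi] lab by (simp add: s_def l_def)
      have sn: "norm s \<le> K" using proxy_norm[OF c_pos, of lab "A n" y] normD[OF An]
        by (simp add: s_def K_def)
      have sn2: "(norm s)\<^sup>2 \<le> K\<^sup>2" using sn by (simp add: power_mono)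
      have "(norm (y + l *\<^sub>R s))\<^sup>2 = (norm y)\<^sup>2 + 2 * (l * (y \<bullet> s)) + (l * l) * (norm s)\<^sup>2"
        by (simp add: power2_norm_eq_inner inner_add_left inner_add_right inner_commute algebra_simps)
      also have "\<dots> \<le> real (m n) * K\<^sup>2 + K\<^sup>2" using IH(3) neg sn2 l2 y_def by simp
      finally have n2: "(norm (y + l *\<^sub>R s))\<^sup>2 \<le> real (m (Suc n)) * K\<^sup>2"
        by (simp add: mSuc algebra_simps)
      have "ystar \<bullet> (y + l *\<^sub>R s) = ystar \<bullet> y + l * (ystar \<bullet> s)" by (simp add: inner_add_right)
      then have "real (m (Suc n)) * (dstar * norm ystar) \<le> ystar \<bullet> (y + l *\<^sub>R s)"
        using IH(2) pm y_def mSuc by (simp add: algebra_simps)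
      then show ?thesis using n2 PSn by simp
    qed
  qed
  have Mset: "mistakes c lab ?L 1 A T = {t\<in>{..<Suc T}. mis t}"
    by (auto simp: mistakes_def mis_def P_def)
  have part1: "(\<Sum>t\<in>mistakes c lab ?L 1 A T.
            hinge (ystar /\<^sub>R (dstar * norm ystar), 0)
                  (proxy c lab (A t) (fst (perceptron c lab ?L 1 A t)) 0, 1)
                  (lab (A t))) \<le> 0"
  proof (rule sum_nonpos)
    fix t assume t: "t \<in> mistakes c lab ?L 1 A T"
    then have tT: "t \<le> T" by (simp add: mistakes_def)
    have At: "A t \<in> Ag" using agents tT by auto
    define y where "y = fst (P t)"
    define s where "s = proxy c lab (A t) y 0"
    define l where "l = lab (A t)"
    have lab: "l = 1 \<or> l = -1" using labels At l_def by auto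
    have ys0: "ystar \<bullet> y \<ge> 0" using inv[of t] tT dstar_pos nys y_def
      by (smt (verit) le_SucI mult_nonneg_nonneg of_nat_0_le_iff)
    have pm: "l * (ystar \<bullet> s) \<ge> dstar * norm ystar"
      using proxy_margin[OF c_pos, of lab "A t" ystar y] lab ys0 marg[OF At]
      by (simp add: s_def l_def)
    have dn: "dstar * norm ystar > 0" using dstar_pos nys by simp
    have "1 \<le> l * (ystar \<bullet> s) / (dstar * norm ystar)" using pm dn by simp
    then have "1 - l * ((ystar /\<^sub>R (dstar * norm ystar), 0) \<bullet> (s, 1)) \<le> 0"
      by (simp add: inner_Pair divide_inverse mult.commute mult.left_commute)
    then show "hinge (ystar /\<^sub>R (dstar * norm ystar), 0)
                  (proxy c lab (A t) (fst (perceptron c lab ?L 1 A t)) 0, 1) (lab (A t)) \<le> 0"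
      by (simp add: hinge_def s_def l_def y_def P_def)
  qed
  define M where "M = real (m (Suc T))"
  have Mc: "real (card (mistakes c lab ?L 1 A T)) = M" by (simp add: Mset M_def m_def)
  have I: "M * (dstar * norm ystar) \<le> ystar \<bullet> fst (P (Suc T))" "(norm (fst (P (Suc T))))\<^sup>2 \<le> M * K\<^sup>2"
    using inv[of "Suc T"] by (auto simp: M_def)
  have part2: "M \<le> ((D + 2 / c)\<^sup>2 + 1) / dstar\<^sup>2"
  proof (cases "M = 0")
    case True then show ?thesis by simp
  next
    case False
    then have Mp: "M > 0" by (simp add: M_def)
    let ?y = "fst (P (Suc T))"
    have "M * (dstar * norm ystar) \<le> norm ystar * norm ?y"
      using I(1) Cauchy_Schwarz_ineq2[of ystar ?y] by linarith
    then have a: "M * dstar \<le> norm ?y" using nys by (simp add: algebra_simps)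
    have "(M * dstar)\<^sup>2 \<le> (norm ?y)\<^sup>2" using a Mp dstar_pos by (simp add: power_mono)
    then have "M * M * dstar\<^sup>2 \<le> M * K\<^sup>2" using I(2) by (simp add: power2_eq_square algebra_simps)
    then have "M * dstar\<^sup>2 \<le> K\<^sup>2" using Mp by (simp add: mult.assoc)
    then have "M * dstar\<^sup>2 \<le> K\<^sup>2 + 1" by simp
    then show ?thesis using dstar_pos by (simp add: pos_le_divide_eq K_def)
  qed
  show ?thesis using part1 part2 Mc by simp
qed

end
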